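(* Let $m\ge n\ge0$ be integers with $m+n$ odd, and let $r(m,n)=[\underbrace{2,\dots,2}_{m},-2,\underbrace{2,\dots,2}_{n}]$. Then the Alexander polynomial $\Delta_{K(r(m,n))}(t)$ (of degree $m+n+1$) has exactly two real zeros (counted with multiplicity), neither equal to $1$, and all its other $m+n-1$ zeros have modulus $1$; that is, $K(r(m,n))$ is a Salem fibred knot. *)

theory Defs
  imports Complex_Main "HOL-Computational_Algebra.Polynomial"
begin

fun cfrac :: "int list \<Rightarrow> rat" where
  "cfrac [] = 0"
| "cfrac (a # as) = 1 / (of_int a - cfrac as)"

definition r_mn :: "nat \<Rightarrow> nat \<Rightarrow> int list" where
  "r_mn m n = replicate m 2 @ [-2] @ replicate n 2"

text \<open>Alexander polynomial of the two-bridge knot K(q/p) (p odd), via the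
  Hartley--Minkus formula  Delta(t) = sum_{i=0}^{p-1} (-1)^i t^(sigma_i),
  sigma_i = sum_{j=1}^i (-1)^floor(j q'/p) (floor via integer div), where q' is q or q+p, whichever is odd.
  The result is normalised (multiplied by a power of t) to an ordinary
  polynomial with nonzero constant term; this does not affect its nonzero zeros.\<close>
definition minkus_sigma :: "int \<Rightarrow> int \<Rightarrow> nat \<Rightarrow> int" where
  "minkus_sigma p q i =
     (let q' = (if odd q then q else q + p)
      in \<Sum>j\<in>{1..i}. (if even ((int j * q') div p) then 1 else -1))"

definition alex_2bridge :: "int \<Rightarrow> int \<Rightarrow> int poly" where
  "alex_2bridge p q =
     (let s = minkus_sigma p q; mn = Min (s ` {..<nat p})
      in \<Sum>i<nat p. monom ((-1) ^ i) (nat (s i - mn)))"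

definition alex_K :: "rat \<Rightarrow> int poly" where
  "alex_K r = (case quotient_of r of (q, p) \<Rightarrow> alex_2bridge p q)"

end

theory Submission
  imports Defs
begin


lemma cfrac_rep:
  assumes "cfrac L = 1 - 1/y" "y > 0"
  shows "cfrac (replicate k 2 @ L) = 1 - 1/(y + of_nat k)"
proof (induction k)
  case 0 then show ?case using assms by simp
next
  case (Suc k)
  have pos: "y + of_nat k > 0" using assms by (simp add: add_pos_nonneg)
  have "cfrac (replicate (Suc k) 2 @ L) = 1 / (2 - (1 - 1/(y + of_nat k)))"
    using Suc by simp
  also have "\<dots> = 1 - 1/(y + of_nat (Suc k))"
    using pos by (simp add: field_simps)
  finally show ?case .
qed

lemma cfrac_r_mn:
  "cfrac (r_mn m n) = 1 - of_nat (4*n+3) / of_nat (m*(4*n+3) + 3*n+2)"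
proof -
  have h0: "cfrac (replicate n 2) = 1 - 1/(1 + of_nat n)"
    using cfrac_rep[of "[]" 1 n] by simp
  have h0': "cfrac (replicate n 2) = of_nat n / (1 + of_nat n)"
    using h0 by (simp add: field_simps)
  have d1: "(1 + rat_of_nat n) \<noteq> 0" by (metis of_nat_Suc of_nat_eq_0_iff nat.distinct(1) add.commute)
  have d2: "- 2 - of_nat n / (1 + rat_of_nat n) = - (of_nat (3*n+2)) / (1 + of_nat n)"
    using d1 by (simp add: field_simps)
  have d3: "rat_of_nat (3*n+2) \<noteq> 0" "rat_of_nat (4*n+3) \<noteq> 0" by (simp only: of_nat_eq_0_iff; simp)+
  have h1: "cfrac ([-2] @ replicate n 2) = 1 - 1/(of_nat (3*n+2) / of_nat (4*n+3))"
    using d1 d3 by (simp add: h0' d2 field_simps)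
  have "cfrac (r_mn m n) = 1 - 1/(of_nat (3*n+2) / of_nat (4*n+3) + of_nat m)"
    unfolding r_mn_def using cfrac_rep[OF h1, of m] by simp
  also have "\<dots> = 1 - of_nat (4*n+3) / of_nat (m*(4*n+3) + 3*n+2)"
    by (simp add: field_simps)
  finally show ?thesis .
qed

lemma quotient_of_intI:
  assumes "b > 0" "coprime a b"
  shows "quotient_of (of_int a / of_int b) = (a, b)"
proof -
  have "of_int a / of_int b = Fract (fst (a,b)) (snd (a,b)) \<and> snd (a,b) > 0 \<and> coprime (fst (a,b)) (snd (a,b))"
    using assms by (simp add: Fract_of_int_quotient)
  then show ?thesis unfolding quotient_of_def
    by (rule the1_equality[OF quotient_of_unique])
qed

lemma quot_r_mn:
  fixes m n :: nat
  defines "p \<equiv> int (m*(4*n+3) + 3*n+2)" and "q \<equiv> int (m*(4*n+3) + 3*n+2) - int (4*n+3)"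
  shows "quotient_of (cfrac (r_mn m n)) = (q, p)"
proof -
  have e: "cfrac (r_mn m n) = of_int q / of_int p"
  proof -
    have b: "rat_of_nat (m*(4*n+3) + 3*n+2) \<noteq> 0" by (simp only: of_nat_eq_0_iff)
    have "(of_int q :: rat) = rat_of_nat (m*(4*n+3) + 3*n+2) - rat_of_nat (4*n+3)"
      "(of_int p :: rat) = rat_of_nat (m*(4*n+3) + 3*n+2)"
      unfolding p_def q_def by (simp only: of_int_diff of_int_of_nat_eq)+
    then show ?thesis unfolding cfrac_r_mn using b by (simp add: field_simps)
  qed
  have bez: "(4 * int m - 1) * p - (4 * int m + 3) * q = 1"
    unfolding p_def q_def by (simp add: algebra_simps)
  have "coprime q p"
  proof (rule coprimeI)
    fix d assume "d dvd q" "d dvd p"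
    then have "d dvd (4 * int m - 1) * p - (4 * int m + 3) * q" by simp
    then show "is_unit d" using bez by simp
  qed
  moreover have "p > 0" unfolding p_def by (simp only: of_nat_0_less_iff)
  ultimately show ?thesis using e quotient_of_intI by simp
qed



lemma int_div_eqI: fixes x a b::int assumes "0<b" "a*b \<le> x" "x < (a+1)*b" shows "x div b = a"
proof -
  have "(x - a*b) div b = 0" using assms by (intro div_pos_pos_trivial) (auto simp: algebra_simps)
  moreover have "x div b = (x - a*b) div b + a"
    by (smt (verit, best) assms(1) div_mult_self3)
  ultimately show ?thesis by simp
qed

definition PP :: "nat \<Rightarrow> nat \<Rightarrow> nat" where "PP m n = m*(4*n+3) + 3*n+2"
definition EE :: "nat \<Rightarrow> nat \<Rightarrow> nat \<Rightarrow> int" where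
  "EE m n j = (if even ((int j * ((int (PP m n) - int (4*n+3)) + int (PP m n))) div int (PP m n)) then 1 else -1)"
definition SG :: "nat \<Rightarrow> nat \<Rightarrow> nat \<Rightarrow> int" where
  "SG m n i = (\<Sum>j\<in>{1..i}. EE m n j)"

lemma EE_val:
  assumes "k * PP m n < j * (4*n+3)" "j * (4*n+3) < (k+1) * PP m n"
  shows "EE m n j = (if odd k then 1 else -1)"
proof -
  define P where "P = int (PP m n)"
  define c where "c = int (4*n+3)"
  have a1: "int k * P < int j * c" using assms(1) unfolding P_def c_def
    by (simp only: of_nat_less_iff flip: of_nat_mult)
  have a2': "int j * c < int (k + 1) * P" using assms(2) unfolding P_def c_def
    by (simp only: of_nat_less_iff flip: of_nat_mult)
  have a2: "int j * c < (int k + 1) * P" using a2' by (simp add: add.commute)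
  have Ppos: "P > 0" unfolding P_def PP_def by (simp only: of_nat_0_less_iff)
  have "int j * ((P - c) + P) div P = 2 * int j - int k - 1"
  proof (rule int_div_eqI)
    show "0 < P" by fact
    show "(2 * int j - int k - 1) * P \<le> int j * (P - c + P)"
      using a2 by (simp add: algebra_simps)
    show "int j * (P - c + P) < (2 * int j - int k - 1 + 1) * P"
      using a1 by (simp add: algebra_simps)
  qed
  then show ?thesis unfolding EE_def P_def[symmetric] c_def[symmetric]
    by (simp add: even_diff)
qed

lemma SG_Suc: "SG m n (Suc i) = SG m n i + EE m n (Suc i)"
  unfolding SG_def by simp

lemma SG_run:
  assumes "\<And>l. 1 \<le> l \<Longrightarrow> l \<le> L \<Longrightarrow> EE m n (b + l) = e"
  shows "l \<le> L \<Longrightarrow> SG m n (b + l) = SG m n b + e * int l"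
proof (induction l)
  case 0 then show ?case by simp
next
  case (Suc l)
  then have "SG m n (b + Suc l) = SG m n (b + l) + EE m n (b + Suc l)"
    using SG_Suc[of m n "b+l"] by simp
  also have "EE m n (b + Suc l) = e" using assms[of "Suc l"] Suc by simp
  finally show ?case using Suc by (simp add: algebra_simps)
qed

lemma EE_blk:
  assumes "k * PP m n + 1 \<le> J0 * (4*n+3)" "J1 * (4*n+3) + 1 \<le> (k+1) * PP m n" "J0 \<le> j" "j \<le> J1"
  shows "EE m n j = (if odd k then 1 else -1)"
proof (rule EE_val)
  have "J0 * (4*n+3) \<le> j * (4*n+3)" using assms(3) by (rule mult_le_mono1)
  then show "k * PP m n < j * (4 * n + 3)" using assms(1) by linarith
  have "j * (4*n+3) \<le> J1 * (4*n+3)" using assms(4) by (rule mult_le_mono1)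
  then show "j * (4 * n + 3) < (k + 1) * PP m n" using assms(2) by linarith
qed

definition BT :: "nat \<Rightarrow> nat \<Rightarrow> nat" where "BT m a = m + a * (4*m+3)"

lemma EE_b0: "1 \<le> j \<Longrightarrow> j \<le> m \<Longrightarrow> EE m n j = -1"
  using EE_blk[of 0 m n 1 m j] by (simp add: PP_def)

lemma EE_b1: assumes "a \<le> n" "1 \<le> l" "l \<le> m+1" shows "EE m n (BT m a + l) = 1"
proof -
  obtain d where d: "n = a + d" using assms(1) le_Suc_ex by blast
  have "EE m n (BT m a + l) = (if odd (4*a+1) then 1 else -1)"
    by (rule EE_blk[of _ _ _ "BT m a + 1" "BT m a + m + 1"])
       (use assms in \<open>auto simp: d PP_def BT_def algebra_simps\<close>)
  then show ?thesis by simp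
qed

lemma EE_b2: assumes "a < n" "1 \<le> l" "l \<le> m+1" shows "EE m n (BT m a + (m+1) + l) = -1"
proof -
  obtain d where d: "n = a + d + 1" using assms(1) less_imp_Suc_add by fastforce
  have "EE m n (BT m a + (m+1) + l) = (if odd (4*a+2) then 1 else -1)"
    by (rule EE_blk[of _ _ _ "BT m a + m + 2" "BT m a + 2*m + 2"])
       (use assms in \<open>auto simp: d PP_def BT_def algebra_simps\<close>)
  then show ?thesis by simp
qed

lemma EE_b3: assumes "a < n" "1 \<le> l" "l \<le> m" shows "EE m n (BT m a + (2*m+2) + l) = 1"
proof -
  obtain d where d: "n = a + d + 1" using assms(1) less_imp_Suc_add by fastforce
  have "EE m n (BT m a + (2*m+2) + l) = (if odd (4*a+3) then 1 else -1)"
    by (rule EE_blk[of _ _ _ "BT m a + 2*m + 3" "BT m a + 3*m + 2"])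
       (use assms in \<open>auto simp: d PP_def BT_def algebra_simps\<close>)
  then show ?thesis by simp
qed

lemma EE_b4: assumes "a < n" "1 \<le> l" "l \<le> m+1" shows "EE m n (BT m a + (3*m+2) + l) = -1"
proof -
  obtain d where d: "n = a + d + 1" using assms(1) less_imp_Suc_add by fastforce
  have "EE m n (BT m a + (3*m+2) + l) = (if odd (4*a+4) then 1 else -1)"
    by (rule EE_blk[of _ _ _ "BT m a + 3*m + 3" "BT m a + 4*m + 3"])
       (use assms in \<open>auto simp: d PP_def BT_def algebra_simps\<close>)
  then show ?thesis by simp
qed

lemma EE_t2: assumes "1 \<le> l" "l \<le> m" shows "EE m n (BT m n + (m+1) + l) = -1"
proof -
  have "EE m n (BT m n + (m+1) + l) = (if odd (4*n+2) then 1 else -1)"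
    by (rule EE_blk[of _ _ _ "BT m n + m + 2" "BT m n + 2*m + 1"])
       (use assms in \<open>auto simp: PP_def BT_def algebra_simps\<close>)
  then show ?thesis by simp
qed

lemma SG_0: "SG m n 0 = 0" unfolding SG_def by simp

lemma SG_b0: "l \<le> m \<Longrightarrow> SG m n l = - int l"
  using SG_run[of m m n 0 "-1" l] EE_b0[of _ m n] by (simp add: SG_0)

lemma SG_grp:
  assumes "a < n" "SG m n (BT m a) = - int m - int a"
  shows "\<forall>l\<le>m+1. SG m n (BT m a + l) = - int m - int a + int l"
    and "\<forall>l\<le>m+1. SG m n (BT m a + (m+1) + l) = 1 - int a - int l"
    and "\<forall>l\<le>m. SG m n (BT m a + (2*m+2) + l) = - int m - int a + int l"
    and "\<forall>l\<le>m+1. SG m n (BT m a + (3*m+2) + l) = - int a - int l"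
proof -
  have r1: "SG m n (BT m a + l) = - int m - int a + int l" if "l \<le> m+1" for l
    using SG_run[of "m+1" m n "BT m a" 1 l] EE_b1[of a n _ m] assms that by simp
  then show "\<forall>l\<le>m+1. SG m n (BT m a + l) = - int m - int a + int l" by blast
  have s1: "SG m n (BT m a + (m+1)) = 1 - int a" using r1[of "m+1"] by simp
  have r2: "SG m n (BT m a + (m+1) + l) = 1 - int a - int l" if "l \<le> m+1" for l
    using SG_run[of "m+1" m n "BT m a + (m+1)" "-1" l] EE_b2[of a n _ m] assms that s1 by simp
  then show "\<forall>l\<le>m+1. SG m n (BT m a + (m+1) + l) = 1 - int a - int l" by blast
  have e2: "BT m a + (m+1) + (m+1) = BT m a + (2*m+2)" by simp
  have s2: "SG m n (BT m a + (2*m+2)) = - int m - int a" using r2[of "m+1"]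
    unfolding e2 by simp
  have r3: "SG m n (BT m a + (2*m+2) + l) = - int m - int a + int l" if "l \<le> m" for l
    using SG_run[of "m" m n "BT m a + (2*m+2)" 1 l] EE_b3[of a n _ m] assms that s2 by simp
  then show "\<forall>l\<le>m. SG m n (BT m a + (2*m+2) + l) = - int m - int a + int l" by blast
  have e3: "BT m a + (2*m+2) + m = BT m a + (3*m+2)" by simp
  have s3: "SG m n (BT m a + (3*m+2)) = - int a" using r3[of "m"]
    unfolding e3 by simp
  have r4: "SG m n (BT m a + (3*m+2) + l) = - int a - int l" if "l \<le> m+1" for l
    using SG_run[of "m+1" m n "BT m a + (3*m+2)" "-1" l] EE_b4[of a n _ m] assms that s3 by simp
  then show "\<forall>l\<le>m+1. SG m n (BT m a + (3*m+2) + l) = - int a - int l" by blast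
qed

lemma BT_Suc: "BT m (Suc a) = BT m a + (3*m+2) + (m+1)"
  unfolding BT_def by simp

lemma SG_BT: "a \<le> n \<Longrightarrow> SG m n (BT m a) = - int m - int a"
proof (induction a)
  case 0 then show ?case using SG_b0[of m m n] by (simp add: BT_def)
next
  case (Suc a)
  then have "a < n" by simp
  from SG_grp(4)[OF this Suc.IH[OF less_imp_le[OF this]], rule_format, of "m+1"]
  show ?case unfolding BT_Suc by simp
qed

lemma SG_tail:
  shows "\<forall>l\<le>m+1. SG m n (BT m n + l) = - int m - int n + int l"
    and "\<forall>l\<le>m. SG m n (BT m n + (m+1) + l) = 1 - int n - int l"
proof -
  have r1: "SG m n (BT m n + l) = - int m - int n + int l" if "l \<le> m+1" for l
    using SG_run[of "m+1" m n "BT m n" 1 l] EE_b1[of n n _ m] SG_BT[of n n m] that by simp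
  then show "\<forall>l\<le>m+1. SG m n (BT m n + l) = - int m - int n + int l" by blast
  have s1: "SG m n (BT m n + (m+1)) = 1 - int n" using r1[of "m+1"] by simp
  have r2: "SG m n (BT m n + (m+1) + l) = 1 - int n - int l" if "l \<le> m" for l
    using SG_run[of "m" m n "BT m n + (m+1)" "-1" l] EE_t2[of _ m n] that s1 by simp
  then show "\<forall>l\<le>m. SG m n (BT m n + (m+1) + l) = 1 - int n - int l" by blast
qed

lemma SG_lower_BT: "a \<le> n \<Longrightarrow> i \<le> BT m a \<Longrightarrow> SG m n i \<ge> - int m - int a"
proof (induction a arbitrary: i)
  case 0 then show ?case using SG_b0[of i m n] by (simp add: BT_def)
next
  case (Suc a)
  then have an: "a < n" by simp
  have IH: "SG m n (BT m a) = - int m - int a" using SG_BT[of a n m] an by simp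
  note G = SG_grp[OF an IH]
  show ?case
  proof (cases "i \<le> BT m a")
    case True then show ?thesis using Suc.IH[of i] an by simp
  next
    case False
    define l where "l = i - BT m a"
    have l: "i = BT m a + l" "l \<le> 4*m+3" using False Suc.prems(2) unfolding l_def BT_Suc by auto
    consider "l \<le> m+1" | "m+1 < l" "l \<le> 2*m+2" | "2*m+2 < l" "l \<le> 3*m+2" | "3*m+2 < l"
      by linarith
    then show ?thesis
    proof cases
      case 1 then show ?thesis using G(1) l by simp
    next
      case 2
      then obtain l' where "l = (m+1) + l'" "l' \<le> m+1" by (intro that[of "l - (m+1)"]) auto
      then show ?thesis using G(2) l by (simp add: add.assoc)
    next
      case 3
      then obtain l' where "l = (2*m+2) + l'" "l' \<le> m" by (intro that[of "l - (2*m+2)"]) auto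
      then show ?thesis using G(3) l by (simp add: add.assoc)
    next
      case 4
      then obtain l' where "l = (3*m+2) + l'" "l' \<le> m+1" using l(2) by (intro that[of "l - (3*m+2)"]) auto
      then show ?thesis using G(4) l by (simp add: add.assoc)
    qed
  qed
qed

lemma PP_eq: "PP m n = BT m n + (m+1) + m + 1"
  unfolding PP_def BT_def by (simp add: algebra_simps)

lemma SG_lower: "i < PP m n \<Longrightarrow> SG m n i \<ge> - int m - int n"
proof -
  assume i: "i < PP m n"
  show ?thesis
  proof (cases "i \<le> BT m n")
    case True then show ?thesis using SG_lower_BT[of n n i m] by simp
  next
    case False
    then obtain l where l: "i = BT m n + l" "l \<le> 2*m+1" using i unfolding PP_eq
      by (intro that[of "i - BT m n"]) auto
    show ?thesis
    proof (cases "l \<le> m+1")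
      case True then show ?thesis using SG_tail(1) l by simp
    next
      case False
      then obtain l' where "l = (m+1) + l'" "l' \<le> m" using l(2) by (intro that[of "l - (m+1)"]) auto
      then show ?thesis using SG_tail(2) l by (simp add: add.assoc)
    qed
  qed
qed

lemma SG_Min: "Min (SG m n ` {..<PP m n}) = - int m - int n"
proof (rule Min_eqI)
  show "finite (SG m n ` {..<PP m n})" by simp
  show "\<And>y. y \<in> SG m n ` {..<PP m n} \<Longrightarrow> - int m - int n \<le> y" using SG_lower by auto
  have "BT m n < PP m n" unfolding PP_eq by simp
  then show "- int m - int n \<in> SG m n ` {..<PP m n}" using SG_BT[of n n m] by force
qed

lemma PP_odd: "odd (m+n) \<Longrightarrow> odd (PP m n)"
  unfolding PP_def by (auto simp: even_add even_mult_iff)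

lemma minkus_SG:
  assumes "odd (m+n)"
  shows "minkus_sigma (int (PP m n)) (int (PP m n) - int (4*n+3)) = SG m n"
proof
  fix i
  have "even (int (PP m n) - int (4*n+3))" using PP_odd[OF assms] by simp
  then show "minkus_sigma (int (PP m n)) (int (PP m n) - int (4*n+3)) i = SG m n i"
    unfolding minkus_sigma_def SG_def EE_def Let_def by simp
qed

lemma alex_eq:
  assumes "odd (m+n)"
  shows "alex_K (cfrac (r_mn m n)) = (\<Sum>i<PP m n. monom ((-1)^i) (nat (SG m n i + int m + int n)))"
proof -
  have q: "quotient_of (cfrac (r_mn m n)) = (int (PP m n) - int (4*n+3), int (PP m n))"
    using quot_r_mn[of m n] unfolding PP_def by simp
  show ?thesis unfolding alex_K_def q
    by (simp only: alex_2bridge_def Let_def minkus_SG[OF assms] nat_int SG_Min prod.case)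
       (simp add: algebra_simps)
qed



lemma map_poly_sum_monom:
  "map_poly (of_int :: int \<Rightarrow> 'a::comm_ring_1) (\<Sum>i\<in>A. monom (c i) (k i)) = (\<Sum>i\<in>A. monom (of_int (c i)) (k i))"
  by (rule poly_eqI) (simp add: coeff_map_poly coeff_sum of_int_sum coeff_monom if_distrib cong: if_cong)

lemma run_up:
  fixes x :: "'a::comm_ring_1"
  assumes "\<And>l. l \<le> L \<Longrightarrow> w (b+l) = s + l"
  shows "(1+x) * (\<Sum>i\<in>{b<..b+L}. (-1)^i * x^(w i)) = (-1)^(b+1) * x^(s+1) + (-1)^(b+L) * x^(s+L+1)"
  using assms
proof (induction L)
  case 0 then show ?case by simp
next
  case (Suc L)
  have e: "{b<..b + Suc L} = insert (b + Suc L) {b<..b+L}" by auto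
  have w: "w (b + Suc L) = s + Suc L" using Suc.prems[of "Suc L"] by simp
  have ins: "(\<Sum>i\<in>{b<..b+Suc L}. (-1)^i * x^(w i)) = (-1)^(b+Suc L) * x^(w (b + Suc L)) + (\<Sum>i\<in>{b<..b+L}. (-1)^i * x^(w i))"
    unfolding e by (rule sum.insert) auto
  have "(1+x) * (\<Sum>i\<in>{b<..b+Suc L}. (-1)^i * x^(w i)) =
        (1+x) * ((-1)^(b+Suc L) * x^(s + Suc L)) + (1+x) * (\<Sum>i\<in>{b<..b+L}. (-1)^i * x^(w i))"
    unfolding ins w by (simp add: algebra_simps)
  also have "\<dots> = (1+x) * ((-1)^(b+Suc L) * x^(s + Suc L)) + ((-1)^(b+1) * x^(s+1) + (-1)^(b+L) * x^(s+L+1))"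
    using Suc by simp
  also have "\<dots> = (-1)^(b+1) * x^(s+1) + (-1)^(b+Suc L) * x^(s+Suc L+1)"
    by (simp add: algebra_simps)
  finally show ?case .
qed

lemma run_down:
  fixes x :: "'a::comm_ring_1"
  assumes "\<And>l. l \<le> L \<Longrightarrow> w (b+l) + l = s"
  shows "(1+x) * (\<Sum>i\<in>{b<..b+L}. (-1)^i * x^(w i)) = (-1)^(b+1) * x^s + (-1)^(b+L) * x^(s-L)"
  using assms
proof (induction L)
  case 0 then show ?case by simp
next
  case (Suc L)
  have e: "{b<..b + Suc L} = insert (b + Suc L) {b<..b+L}" by auto
  have w: "w (b + Suc L) = s - Suc L" "s \<ge> Suc L" using Suc.prems[of "Suc L"] by auto
  have ins: "(\<Sum>i\<in>{b<..b+Suc L}. (-1)^i * x^(w i)) = (-1)^(b+Suc L) * x^(w (b + Suc L)) + (\<Sum>i\<in>{b<..b+L}. (-1)^i * x^(w i))"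
    unfolding e by (rule sum.insert) auto
  have "(1+x) * (\<Sum>i\<in>{b<..b+Suc L}. (-1)^i * x^(w i)) =
        (1+x) * ((-1)^(b+Suc L) * x^(s - Suc L)) + (1+x) * (\<Sum>i\<in>{b<..b+L}. (-1)^i * x^(w i))"
    unfolding ins w by (simp add: algebra_simps)
  also have "\<dots> = (1+x) * ((-1)^(b+Suc L) * x^(s - Suc L)) + ((-1)^(b+1) * x^s + (-1)^(b+L) * x^(s-L))"
    using Suc by simp
  also have "x^(s-L) = x * x^(s - Suc L)" using w(2)
    by (metis Suc_diff_le diff_Suc_Suc power_Suc)
  also have "(1+x) * ((-1)^(b+Suc L) * x^(s - Suc L)) + ((-1)^(b+1) * x^s + (-1)^(b+L) * (x * x^(s - Suc L)))
     = (-1)^(b+1) * x^s + (-1)^(b+Suc L) * x^(s-Suc L)"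
    by (simp add: algebra_simps)
  finally show ?case .
qed

lemma T_add: fixes b :: nat shows "(\<Sum>i\<in>{b<..b+(L1+L2)}. f i) = (\<Sum>i\<in>{b<..b+L1}. f i) + (\<Sum>i\<in>{b+L1<..b+L1+L2}. f i)"
proof -
  have "{b<..b+(L1+L2)} = {b<..b+L1} \<union> {b+L1<..b+L1+L2}" using ivl_disj_un_two(6)[of b "b+L1" "b+L1+L2"] by (simp add: add.assoc)
  moreover have "{b<..b+L1} \<inter> {b+L1<..b+L1+L2} = {}" by auto
  ultimately show ?thesis by (simp add: sum.union_disjoint)
qed

lemma S_split: fixes N :: nat shows "(\<Sum>i<Suc N. f i) = f 0 + (\<Sum>i\<in>{0<..0+N}. f i)"
proof -
  have "{..<Suc N} = insert 0 {0<..0+N}" by auto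
  then show ?thesis by simp
qed



definition WW :: "nat \<Rightarrow> nat \<Rightarrow> nat \<Rightarrow> nat" where "WW m n i = nat (SG m n i + int m + int n)"

lemma wb0: "l \<le> m \<Longrightarrow> WW m n (0 + l) + l = m + n"
  unfolding WW_def using SG_b0[of l m n] by simp

lemma wg:
  assumes "a < n"
  shows "l \<le> m+1 \<Longrightarrow> WW m n (BT m a + l) = (n - a) + l"
    and "l \<le> m+1 \<Longrightarrow> WW m n (BT m a + (m+1) + l) + l = (n - a) + m + 1"
    and "l \<le> m \<Longrightarrow> WW m n (BT m a + (2*m+2) + l) = (n - a) + l"
    and "l \<le> m+1 \<Longrightarrow> WW m n (BT m a + (3*m+2) + l) + l = (n - a) + m"
proof -
  note G = SG_grp[OF assms SG_BT[of a n m, OF less_imp_le[OF assms]]]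
  show "l \<le> m+1 \<Longrightarrow> WW m n (BT m a + l) = (n - a) + l"
    unfolding WW_def using G(1) assms by (simp add: nat_eq_iff)
  show "l \<le> m+1 \<Longrightarrow> WW m n (BT m a + (m+1) + l) + l = (n - a) + m + 1"
    unfolding WW_def using G(2) assms by (simp add: nat_eq_iff)
  show "l \<le> m \<Longrightarrow> WW m n (BT m a + (2*m+2) + l) = (n - a) + l"
    unfolding WW_def using G(3) assms by (simp add: nat_eq_iff)
  show "l \<le> m+1 \<Longrightarrow> WW m n (BT m a + (3*m+2) + l) + l = (n - a) + m"
    unfolding WW_def using G(4) assms by (simp add: nat_eq_iff)
qed

lemma wt:
  shows "l \<le> m+1 \<Longrightarrow> WW m n (BT m n + l) = 0 + l"
    and "l \<le> m \<Longrightarrow> WW m n (BT m n + (m+1) + l) + l = m + 1"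
  unfolding WW_def using SG_tail by (simp_all add: nat_eq_iff)

lemma neg1_BT: "(-1::'a::comm_ring_1)^(BT m a + k) = (-1)^m * (-1)^a * (-1)^k"
  unfolding BT_def by (simp add: minus_one_power_iff even_add even_mult_iff)

lemma T_add': "b' = b + L1 \<Longrightarrow> (\<Sum>i\<in>{b<..b+(L1+L2)}. f i) = (\<Sum>i\<in>{b<..b+L1}. f i) + (\<Sum>i\<in>{b'<..b'+L2}. f i)"
  for b :: nat using T_add[of f b L1 L2] by simp

definition YY :: "nat \<Rightarrow> 'a::comm_ring_1 \<Rightarrow> 'a" where
  "YY m x = (-1)^m*(x - 2*x^2 - 1) - x^(m+1) + 2*x^(m+2) - x^(m+3)"

lemma grp_sum:
  fixes x :: "'a::comm_ring_1"
  assumes "a < n"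
  shows "(1+x) * (\<Sum>i\<in>{BT m a<..BT m a + (4*m+3)}. (-1)^i * x^(WW m n i)) = (-1)^a * x^(n-a-1) * YY m x"
proof -
  define b where "b = BT m a"
  define F where "F i = (-1)^i * x^(WW m n i)" for i
  have e: "4*m+3 = (m+1) + ((m+1) + (m + (m+1)))" by simp
  have split: "(\<Sum>i\<in>{b<..b + (4*m+3)}. F i) = (\<Sum>i\<in>{b<..b+(m+1)}. F i) + (\<Sum>i\<in>{b+(m+1)<..b+(m+1)+(m+1)}. F i)
     + (\<Sum>i\<in>{b+(2*m+2)<..b+(2*m+2)+m}. F i) + (\<Sum>i\<in>{b+(3*m+2)<..b+(3*m+2)+(m+1)}. F i)"
    unfolding e
    by (subst T_add'[of "b+(m+1)"], simp, subst T_add'[of "b+(2*m+2)"], simp, subst T_add'[of "b+(3*m+2)"], simp) simp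
  have R1: "(1+x) * (\<Sum>i\<in>{b<..b+(m+1)}. F i) = (-1)^(b+1) * x^((n-a)+1) + (-1)^(b+(m+1)) * x^((n-a)+(m+1)+1)"
    unfolding F_def by (rule run_up) (use wg(1)[OF assms] in \<open>simp add: b_def\<close>)
  have R2: "(1+x) * (\<Sum>i\<in>{b+(m+1)<..b+(m+1)+(m+1)}. F i) = (-1)^(b+(m+1)+1) * x^((n-a)+m+1) + (-1)^(b+(m+1)+(m+1)) * x^((n-a)+m+1-(m+1))"
    unfolding F_def by (rule run_down) (use wg(2)[OF assms] in \<open>simp add: b_def\<close>)
  have R3: "(1+x) * (\<Sum>i\<in>{b+(2*m+2)<..b+(2*m+2)+m}. F i) = (-1)^(b+(2*m+2)+1) * x^((n-a)+1) + (-1)^(b+(2*m+2)+m) * x^((n-a)+m+1)"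
    unfolding F_def by (rule run_up) (use wg(3)[OF assms] in \<open>simp add: b_def\<close>)
  have R4: "(1+x) * (\<Sum>i\<in>{b+(3*m+2)<..b+(3*m+2)+(m+1)}. F i) = (-1)^(b+(3*m+2)+1) * x^((n-a)+m) + (-1)^(b+(3*m+2)+(m+1)) * x^((n-a)+m-(m+1))"
    unfolding F_def by (rule run_down) (use wg(4)[OF assms] in \<open>simp add: b_def\<close>)
  obtain u where u: "n - a = u + 1" using assms by (metis Suc_diff_Suc Suc_eq_plus1)
  have "(1+x) * (\<Sum>i\<in>{b<..b + (4*m+3)}. F i) = 
     ((-1)^(b+1) * x^((n-a)+1) + (-1)^(b+(m+1)) * x^((n-a)+(m+1)+1))
   + ((-1)^(b+(m+1)+1) * x^((n-a)+m+1) + (-1)^(b+(m+1)+(m+1)) * x^((n-a)+m+1-(m+1)))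
   + ((-1)^(b+(2*m+2)+1) * x^((n-a)+1) + (-1)^(b+(2*m+2)+m) * x^((n-a)+m+1))
   + ((-1)^(b+(3*m+2)+1) * x^((n-a)+m) + (-1)^(b+(3*m+2)+(m+1)) * x^((n-a)+m-(m+1)))"
    unfolding split R1[symmetric] R2[symmetric] R3[symmetric] R4[symmetric] by (simp add: algebra_simps)
  also have "\<dots> = (-1)^a * x^(n-a-1) * YY m x"
  proof -
    define sm :: 'a where "sm = (-1)^m"
    define sa :: 'a where "sa = (-1)^a"
    have sq: "sm * sm = 1" unfolding sm_def by (simp flip: power_add)
    have n3: "(-1::'a)^(3*m) = (-1)^m" by (simp add: minus_one_power_iff even_mult_iff)
    have s1: "(-1::'a)^(b+1) = - (sm*sa)" unfolding b_def sm_def sa_def neg1_BT by simp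
    have s2: "(-1::'a)^(b+(m+1)) = - (sm*sa*sm)" unfolding b_def sm_def sa_def neg1_BT by simp
    have s3: "(-1::'a)^(b+(m+1)+1) = sm*sa*sm" unfolding b_def sm_def sa_def add.assoc neg1_BT by simp
    have s4: "(-1::'a)^(b+(m+1)+(m+1)) = sm*sa" unfolding b_def sm_def sa_def add.assoc neg1_BT
      by (simp add: power_add flip: mult_2)
    have s5: "(-1::'a)^(b+(2*m+2)+1) = - (sm*sa)" unfolding b_def sm_def sa_def add.assoc neg1_BT
      by (simp add: power_add)
    have s6: "(-1::'a)^(b+(2*m+2)+m) = sm*sa*sm" unfolding b_def sm_def sa_def add.assoc neg1_BT
      by (simp add: power_add n3)
    have s7: "(-1::'a)^(b+(3*m+2)+1) = - (sm*sa*sm)" unfolding b_def sm_def sa_def add.assoc neg1_BT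
      by (simp add: power_add power_mult_distrib minus_one_power_iff)
    have s8: "(-1::'a)^(b+(3*m+2)+(m+1)) = - (sm*sa)" unfolding b_def sm_def sa_def add.assoc neg1_BT
      by (simp add: minus_one_power_iff)
    have x1: "n-a+1 = u+2" "n - a + (m + 1) + 1 = u+m+3" "n - a + m + 1 = u+m+2" "n - a + m + 1 - (m + 1) = u+1"
      "n - a + m = u+m+1" "n - a + m - (m + 1) = u" "n-a-1 = u" using u by simp_all
    show ?thesis unfolding s1 s2 s3 s4 s5 s6 s7 s8 x1 YY_def sm_def[symmetric] sa_def[symmetric]
      by (simp add: power_add algebra_simps sq power2_eq_square)
  qed
  finally show ?thesis unfolding F_def b_def .
qed
lemma T_groups: "(\<Sum>i\<in>{0<..BT m k}. f i) = (\<Sum>i\<in>{0<..m}. f i) + (\<Sum>a<k. (\<Sum>i\<in>{BT m a<..BT m a + (4*m+3)}. f i))"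
proof (induction k)
  case 0 then show ?case by (simp add: BT_def)
next
  case (Suc k)
  have "BT m (Suc k) = BT m k + (4*m+3)" unfolding BT_def by simp
  then have "(\<Sum>i\<in>{0<..BT m (Suc k)}. f i) = (\<Sum>i\<in>{0<..BT m k}. f i) + (\<Sum>i\<in>{BT m k<..BT m k + (4*m+3)}. f i)"
    using T_add[of f 0 "BT m k" "4*m+3"] by simp
  then show ?case using Suc by (simp add: add.assoc)
qed

lemma alt_tel:
  fixes x :: "'a::comm_ring_1"
  shows "k \<le> n \<Longrightarrow> (1+x) * (\<Sum>a<k. (-1)^a * x^(n-a-1)) = x^n - (-1)^k * x^(n-k)"
proof (induction k)
  case 0 then show ?case by simp
next
  case (Suc k)
  then have IH: "(1+x) * (\<Sum>a<k. (-1)^a * x^(n-a-1)) = x^n - (-1)^k * x^(n-k)" by simp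
  obtain v where v: "n - k = Suc v" using Suc.prems by (metis Suc_diff_Suc Suc_le_lessD)
  then have v2: "n - k - 1 = v" "n - Suc k = v" by simp_all
  show ?case using IH unfolding sum.lessThan_Suc v v2 by (simp add: algebra_simps)
qed

definition FF :: "nat \<Rightarrow> nat \<Rightarrow> 'a::comm_ring_1 \<Rightarrow> 'a" where
  "FF m n x = -1 + 3*x + 2*(-1)^m*x^(n+1) - 2*(-1)^m*x^(n+2) - x^(m+n+3) + 3*x^(m+n+2)
     + 2*(-1)^m*x^(m+2) - 2*(-1)^m*x^(m+1)"

lemma poly_alex:
  fixes x :: "'a::comm_ring_1"
  assumes "odd (m+n)"
  shows "poly (map_poly of_int (alex_K (cfrac (r_mn m n)))) x = (\<Sum>i<PP m n. (-1)^i * x^(WW m n i))"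
  unfolding alex_eq[OF assms] map_poly_sum_monom poly_sum poly_monom WW_def
  by (simp add: algebra_simps)

lemma eval_main:
  fixes x :: "'a::comm_ring_1"
  assumes odd: "odd (m+n)"
  shows "(1+x)^2 * poly (map_poly of_int (alex_K (cfrac (r_mn m n)))) x = FF m n x"
proof -
  define F where "F i = (-1)^i * x^(WW m n i)" for i
  define B where "B = BT m n"
  have P: "PP m n = Suc (B + ((m+1) + m))" unfolding PP_eq B_def by simp
  have S: "(\<Sum>i<PP m n. F i) = F 0 + (\<Sum>i\<in>{0<..m}. F i) + (\<Sum>a<n. (\<Sum>i\<in>{BT m a<..BT m a + (4*m+3)}. F i))
     + (\<Sum>i\<in>{B<..B+(m+1)}. F i) + (\<Sum>i\<in>{B+(m+1)<..B+(m+1)+m}. F i)"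
  proof -
    have t1: "(\<Sum>i\<in>{0<..0+(B+((m+1)+m))}. F i) = (\<Sum>i\<in>{0<..0+B}. F i) + (\<Sum>i\<in>{B<..B+((m+1)+m)}. F i)"
      by (rule T_add') simp
    have t2: "(\<Sum>i\<in>{B<..B+((m+1)+m)}. F i) = (\<Sum>i\<in>{B<..B+(m+1)}. F i) + (\<Sum>i\<in>{B+(m+1)<..B+(m+1)+m}. F i)"
      by (rule T_add)
    have t3: "(\<Sum>i\<in>{0<..0+B}. F i) = (\<Sum>i\<in>{0<..m}. F i) + (\<Sum>a<n. (\<Sum>i\<in>{BT m a<..BT m a + (4*m+3)}. F i))"
      unfolding B_def add_0_left by (rule T_groups)
    show ?thesis unfolding P S_split t1 t2 t3 by (simp only: add.assoc)
  qed
  have F0: "F 0 = x^(m+n)" unfolding F_def WW_def using SG_0[of m n] by (simp flip: of_nat_add)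
  have R0: "(1+x) * (\<Sum>i\<in>{0<..0+m}. F i) = (-1)^(0+1) * x^(m+n) + (-1)^(0+m) * x^(m+n-m)"
    unfolding F_def by (rule run_down) (use wb0 in auto)
  have R1: "(1+x) * (\<Sum>i\<in>{B<..B+(m+1)}. F i) = (-1)^(B+1) * x^(0+1) + (-1)^(B+(m+1)) * x^(0+(m+1)+1)"
    unfolding F_def by (rule run_up) (use wt(1) in \<open>simp add: B_def\<close>)
  have R2: "(1+x) * (\<Sum>i\<in>{B+(m+1)<..B+(m+1)+m}. F i) = (-1)^(B+(m+1)+1) * x^(m+1) + (-1)^(B+(m+1)+m) * x^(m+1-m)"
    unfolding F_def by (rule run_down) (use wt(2) in \<open>simp add: B_def\<close>)
  have RG: "(1+x) * (\<Sum>a<n. (\<Sum>i\<in>{BT m a<..BT m a + (4*m+3)}. F i)) = YY m x * (\<Sum>a<n. (-1)^a * x^(n-a-1))"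
    unfolding sum_distrib_left[of "1+x" "\<lambda>a. \<Sum>i\<in>{BT m a<..BT m a + (4*m+3)}. F i" "{..<n}"]
      sum_distrib_left[of "YY m x"]
  proof (rule sum.cong)
    fix a assume "a \<in> {..<n}" then have an: "a < n" by simp
    show "(1+x) * (\<Sum>i\<in>{BT m a<..BT m a + (4*m+3)}. F i) = YY m x * ((-1)^a * x^(n-a-1))"
      unfolding F_def grp_sum[OF an] by (simp only: mult_ac)
  qed simp
  have RT: "(1+x) * (\<Sum>a<n. (-1)^a * x^(n-a-1)) = x^n - (-1)^n" using alt_tel[of n n x] by simp
  define sm :: 'a where "sm = (-1)^m"
  have sn: "(-1::'a)^n = - sm" unfolding sm_def using odd
    by (auto simp: minus_one_power_iff even_add)
  have sq: "sm * sm = 1" unfolding sm_def by (simp flip: power_add)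
  have b1: "(-1::'a)^(B+1) = 1" "(-1::'a)^(B+(m+1)) = sm" "(-1::'a)^(B+(m+1)+1) = - sm" "(-1::'a)^(B+(m+1)+m) = 1"
    unfolding B_def add.assoc neg1_BT sn sm_def[symmetric]
    by (simp_all add: power_add sq sm_def flip: mult_2)
  have "(1+x)^2 * (\<Sum>i<PP m n. F i) = (1+x) * ((1+x) * F 0 + (1+x) * (\<Sum>i\<in>{0<..0+m}. F i)
      + (1+x) * (\<Sum>i\<in>{B<..B+(m+1)}. F i) + (1+x) * (\<Sum>i\<in>{B+(m+1)<..B+(m+1)+m}. F i))
      + (1+x) * ((1+x) * (\<Sum>a<n. (\<Sum>i\<in>{BT m a<..BT m a + (4*m+3)}. F i)))"
    unfolding S power2_eq_square by (simp add: algebra_simps)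
  also have "\<dots> = FF m n x"
  proof -
    have G: "(1+x) * ((1+x) * (\<Sum>a<n. (\<Sum>i\<in>{BT m a<..BT m a + (4*m+3)}. F i))) = YY m x * (x^n - (-1)^n)"
      unfolding RG by (simp only: mult.left_commute[of "1+x" "YY m x"] RT)
    have e0: "(-1::'a)^(0+1) = -1" "(-1::'a)^(0+m) = sm" "m+n-m = n" "0+1 = (1::nat)" "0+(m+1)+1 = m+2" "m+1-m = 1"
      by (simp_all add: sm_def)
    have sq2: "sm * (sm * y) = y" for y using sq by (simp add: mult.assoc[symmetric])
    show ?thesis
      unfolding R0 R1 R2 F0 G e0 b1 sn FF_def YY_def sm_def[symmetric]
      by (simp add: power_add algebra_simps sq sq2 power2_eq_square power3_eq_cube)
  qed
  finally show ?thesis unfolding poly_alex[OF odd] F_def .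
qed


definition BB :: "nat \<Rightarrow> nat \<Rightarrow> complex \<Rightarrow> complex" where
  "BB m n z = -1 + 3*z + 2*(-1)^m*z^(n+1) - 2*(-1)^m*z^(n+2)"

lemma cis_shift: "k \<le> N \<Longrightarrow> cis (real N * t) * cis (-t) ^ k = cis t ^ (N - k)"
  by (simp add: DeMoivre cis_mult of_nat_diff algebra_simps)

lemma FF_cis:
  fixes t :: real and m n :: nat
  defines "h \<equiv> real (m+n+3) / 2"
  defines "w \<equiv> cis (-(h*t)) * BB m n (cis t)"
  shows "FF m n (cis t) = cis (h*t) * (w + cnj w)"
proof -
  have c1: "cis (h*t) * cis (-(h*t)) = 1" by (simp add: cis_mult)
  have c2: "cis (h*t) * cis (h*t) = cis (real (m+n+3) * t)" unfolding h_def by (simp add: cis_mult algebra_simps)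
  have cB: "cnj (BB m n (cis t)) = -1 + 3*cis(-t) + 2*(-1)^m*cis(-t)^(n+1) - 2*(-1)^m*cis(-t)^(n+2)"
    unfolding BB_def by (simp add: cis_cnj)
  have cw: "cnj w = cis (h*t) * cnj (BB m n (cis t))" unfolding w_def by (simp add: cis_cnj)
  have "cis (h*t) * (w + cnj w) = (cis (h*t) * cis (-(h*t))) * BB m n (cis t) + (cis (h*t) * cis (h*t)) * cnj (BB m n (cis t))"
    unfolding cw unfolding w_def by (simp only: distrib_left mult.assoc)
  also have "\<dots> = BB m n (cis t) + cis (real (m+n+3) * t) * cnj (BB m n (cis t))"
    unfolding c1 c2 by simp
  also have "cis (real (m+n+3) * t) * cnj (BB m n (cis t)) =
      - (cis (real (m+n+3) * t) * cis (-t)^0) + 3 * (cis (real (m+n+3) * t) * cis(-t)^1)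
      + 2*(-1)^m*(cis (real (m+n+3) * t) * cis(-t)^(n+1)) - 2*(-1)^m*(cis (real (m+n+3) * t) * cis(-t)^(n+2))"
    unfolding cB by (simp add: algebra_simps)
  also have "\<dots> = - ((cis t) ^ (m+n+3)) + 3 * (cis t) ^ (m+n+2) + 2*(-1)^m * (cis t) ^ (m+2) - 2*(-1)^m * (cis t)^(m+1)"
  proof -
    have "cis (real (m+n+3) * t) * cis (-t)^0 = cis t ^ (m+n+3)" using cis_shift[of 0 "m+n+3" t] by (simp only: le0 diff_zero)
    moreover have "cis (real (m+n+3) * t) * cis (-t)^1 = cis t ^ (m+n+2)" using cis_shift[of 1 "m+n+3" t] by simp
    moreover have "cis (real (m+n+3) * t) * cis (-t)^(n+1) = cis t ^ (m+2)" using cis_shift[of "n+1" "m+n+3" t] by simp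
    moreover have "cis (real (m+n+3) * t) * cis (-t)^(n+2) = cis t ^ (m+1)" using cis_shift[of "n+2" "m+n+3" t] by simp
    ultimately show ?thesis by (simp only:)
  qed
  finally show ?thesis unfolding FF_def BB_def by (simp add: algebra_simps)
qed

lemma FF_zero_cis:
  fixes t :: real and m n :: nat
  assumes "Re (cis (-(real (m+n+3) / 2 * t)) * BB m n (cis t)) = 0"
  shows "FF m n (cis t) = 0"
  using assms unfolding FF_cis[of m n t] complex_add_cnj by simp

lemma cc_sq: "cos t * cos t = 1 - sin t * sin t" for t :: real
  using sin_cos_squared_add[of t] unfolding power2_eq_square by linarith

definition AL :: "real \<Rightarrow> real" where
  "AL t = arccos ((3*cos t - 1) / sqrt (10 - 6*cos t))"

lemma AL_aux:
  fixes t :: real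
  shows "sqrt (10 - 6*cos t) > 0" "-1 \<le> (3*cos t - 1) / sqrt (10 - 6*cos t)" "(3*cos t - 1) / sqrt (10 - 6*cos t) \<le> 1"
proof -
  have c1: "cos t \<le> 1" "-1 \<le> cos t" by simp_all
  have "10 - 6*cos t > 0" using c1 by linarith
  then show rp: "sqrt (10 - 6*cos t) > 0" by simp
  have "(3*cos t - 1)^2 \<le> 10 - 6*cos t"
  proof -
    have "(cos t)^2 \<le> 1" by (simp add: cos_squared_eq)
    then show ?thesis by (simp add: power2_eq_square algebra_simps)
  qed
  then have "sqrt ((3*cos t - 1)^2) \<le> sqrt (10 - 6*cos t)" by (rule real_sqrt_le_mono)
  then have a: "\<bar>3*cos t - 1\<bar> \<le> sqrt (10 - 6*cos t)" by simp
  show "-1 \<le> (3*cos t - 1) / sqrt (10 - 6*cos t)" using a rp by (simp add: field_simps abs_le_iff)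
  show "(3*cos t - 1) / sqrt (10 - 6*cos t) \<le> 1" using a rp by (simp add: field_simps abs_le_iff)
qed

lemma AL_rep:
  fixes t :: real
  assumes "0 \<le> t" "t \<le> pi"
  shows "3 * cis t - 1 = complex_of_real (sqrt (10 - 6*cos t)) * cis (AL t)"
proof -
  define r where "r = sqrt (10 - 6*cos t)"
  define y where "y = (3*cos t - 1) / r"
  have rp: "r > 0" and yb: "-1 \<le> y" "y \<le> 1" using AL_aux[of t] unfolding r_def y_def by auto
  have r2: "r^2 = 10 - 6*cos t" unfolding r_def using AL_aux(1)[of t] by simp
  have s0: "sin t \<ge> 0" using assms by (rule sin_ge_zero)
  have cA: "cos (AL t) = y" unfolding AL_def y_def[symmetric] r_def[symmetric] using yb by simp
  have "1 - y^2 = (3 * sin t / r)^2"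
  proof -
    have "1 - y^2 = (r^2 - (3*cos t - 1)^2) / r^2" unfolding y_def using rp by (simp add: field_simps)
    also have "r^2 - (3*cos t - 1)^2 = (3 * sin t)^2" unfolding r2
      by (simp add: power2_diff power2_sum cos_squared_eq algebra_simps power_mult_distrib)
    finally show ?thesis by (simp add: power_divide)
  qed
  then have sA: "sin (AL t) = 3 * sin t / r" unfolding AL_def y_def[symmetric] r_def[symmetric]
    using yb s0 rp by (simp add: sin_arccos)
  show ?thesis unfolding r_def[symmetric]
    by (rule complex_eqI) (use rp in \<open>simp_all add: cA sA y_def\<close>)
qed

lemma AL_cont: "continuous_on {0..pi} AL"
  unfolding AL_def
  by (intro continuous_intros) (use AL_aux in \<open>auto simp: less_imp_neq[symmetric]\<close>)

lemma AL_0: "AL 0 = 0" unfolding AL_def by simp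
lemma AL_pi: "AL pi = pi" unfolding AL_def by simp

lemma V_small:
  fixes t :: real
  assumes "cos t > -1"
  shows "cmod (2*(-1)^m * cis t^(n+1) * (1 - cis t)) < cmod (3 * cis t - 1)"
proof -
  have e1: "cmod (2*(-1)^m * cis t^(n+1) * (1 - cis t)) = 2 * cmod (1 - cis t)"
    by (simp add: norm_mult norm_power)
  have a2: "(cmod (1 - cis t))^2 = 2 - 2*cos t"
    unfolding cmod_power2 by (simp add: power2_diff power2_sum cos_squared_eq algebra_simps power_mult_distrib)
  have b2: "(cmod (3 * cis t - 1))^2 = 10 - 6*cos t"
    unfolding cmod_power2 by (simp add: power2_diff power2_sum cos_squared_eq algebra_simps power_mult_distrib)
  have "(2 * cmod (1 - cis t))^2 < (cmod (3 * cis t - 1))^2"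
    unfolding b2 power_mult_distrib a2 using assms by simp
  then show ?thesis unfolding e1 by (rule power2_less_imp_less) simp
qed



lemma BB_split: "BB m n z = (3*z - 1) + 2*(-1)^m * z^(n+1) * (1 - z)"
  unfolding BB_def by (simp add: algebra_simps)

lemma sign_at:
  fixes t :: real and k M :: nat
  assumes t: "0 \<le> t" "t < pi" and eq: "real M * t - AL t = real k * pi"
  shows "(-1)^k * Re (cis (-(real M * t)) * BB m n (cis t)) > 0"
proof -
  define r where "r = sqrt (10 - 6*cos t)"
  define V where "V = 2*(-1)^m * cis t^(n+1) * (1 - cis t)"
  have rp: "r > 0" unfolding r_def using AL_aux(1) .
  have ct: "cos t > -1"
  proof -
    have "cos pi < cos t" using t by (intro cos_monotone_0_pi) auto
    then show ?thesis by simp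
  qed
  have rep: "3 * cis t - 1 = complex_of_real r * cis (AL t)" unfolding r_def using AL_rep t by simp
  have cr: "cmod (3 * cis t - 1) = r" unfolding rep using rp by (simp add: norm_mult)
  have Vs: "cmod V < r" unfolding V_def using V_small[OF ct, of m n] cr by simp
  have "cis (-(real M * t)) * (3 * cis t - 1) = complex_of_real r * cis (AL t - real M * t)"
    unfolding rep by (simp add: cis_mult algebra_simps)
  also have "AL t - real M * t = - (real k * pi)" using eq by simp
  also have "cis (- (real k * pi)) = complex_of_real ((-1)^k)"
    by (rule complex_eqI) simp_all
  finally have e1: "cis (-(real M * t)) * (3 * cis t - 1) = complex_of_real (r * (-1)^k)" by simp
  have "Re (cis (-(real M * t)) * BB m n (cis t)) = r * (-1)^k + Re (cis (-(real M * t)) * V)"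
    unfolding BB_split V_def[symmetric] distrib_left e1 by simp
  moreover have "\<bar>Re (cis (-(real M * t)) * V)\<bar> < r"
    using abs_Re_le_cmod[of "cis (-(real M * t)) * V"] Vs by (simp add: norm_mult)
  ultimately show ?thesis
    by (cases "even k") (auto simp: abs_less_iff)
qed

definition PHI :: "nat \<Rightarrow> real \<Rightarrow> real" where "PHI M t = real M * t - AL t"

lemma PHI_cont: "continuous_on {a..b} (PHI M)" if "0 \<le> a" "b \<le> pi"
proof -
  have "continuous_on {a..b} AL" using AL_cont by (rule continuous_on_subset) (use that in auto)
  then show ?thesis unfolding PHI_def by (intro continuous_intros)
qed

lemma thetas:
  assumes "K \<le> M - 1"
  shows "\<exists>th::nat\<Rightarrow>real. th 0 = 0 \<and> (\<forall>k\<le>K. 0 \<le> th k \<and> th k \<le> pi \<and> PHI M (th k) = real k * pi)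
          \<and> (\<forall>k<K. th k < th (Suc k))"
  using assms
proof (induction K)
  case 0
  show ?case by (rule exI[of _ "\<lambda>_. 0"]) (simp add: PHI_def AL_0)
next
  case (Suc K)
  then obtain th where th: "th 0 = 0" "\<forall>k\<le>K. 0 \<le> th k \<and> th k \<le> pi \<and> PHI M (th k) = real k * pi"
    "\<forall>k<K. th k < th (Suc k)" by auto
  have a0: "0 \<le> th K" "th K \<le> pi" "PHI M (th K) = real K * pi" using th(2) by auto
  have "PHI M pi = (real M - 1) * pi" by (simp add: PHI_def AL_pi algebra_simps)
  moreover have "real (Suc K) \<le> real M - 1" using Suc.prems by linarith
  ultimately have up: "real (Suc K) * pi \<le> PHI M pi" by (simp add: mult_right_mono)
  have lo: "PHI M (th K) \<le> real (Suc K) * pi" using a0 by simp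
  obtain x where x: "th K \<le> x" "x \<le> pi" "PHI M x = real (Suc K) * pi"
    using IVT'[OF lo up a0(2) PHI_cont[OF a0(1) order_refl]] by auto
  have "x \<noteq> th K" using x(3) a0(3) by auto
  then have xg: "th K < x" using x(1) by simp
  define th' where "th' = th(Suc K := x)"
  have A: "\<forall>k\<le>Suc K. 0 \<le> th' k \<and> th' k \<le> pi \<and> PHI M (th' k) = real k * pi"
  proof (intro allI impI)
    fix k assume "k \<le> Suc K"
    then show "0 \<le> th' k \<and> th' k \<le> pi \<and> PHI M (th' k) = real k * pi"
      unfolding th'_def using th(2) x a0 by (cases "k = Suc K") auto
  qed
  have B: "\<forall>k<Suc K. th' k < th' (Suc k)"
  proof (intro allI impI)
    fix k assume "k < Suc K"
    then show "th' k < th' (Suc k)"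
      unfolding th'_def using th(3) xg by (cases "k = K") auto
  qed
  have C: "th' 0 = 0" unfolding th'_def using th(1) by simp
  show ?case using A B C by blast
qed

lemma mono_upto:
  fixes th :: "nat \<Rightarrow> real"
  assumes "\<forall>k<K. th k < th (Suc k)"
  shows "i < j \<Longrightarrow> j \<le> K \<Longrightarrow> th i < th j"
proof (induction j)
  case 0 then show ?case by simp
next
  case (Suc j)
  then show ?case using assms by (cases "i = j") (auto intro: less_trans)
qed

lemma zeros:
  fixes m n M :: nat
  assumes M: "2*M = m+n+3" "M \<ge> 2"
  shows "\<exists>Z::nat\<Rightarrow>real. (\<forall>k<M-2. 0 < Z k \<and> Z k < pi \<and> FF m n (cis (Z k)) = 0)
           \<and> (\<forall>k j. k < j \<longrightarrow> j < M-2 \<longrightarrow> Z k < Z j)"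
proof -
  obtain th where th: "th 0 = 0" "\<forall>k\<le>M-1. 0 \<le> th k \<and> th k \<le> pi \<and> PHI M (th k) = real k * pi"
    "\<forall>k<M-1. th k < th (Suc k)" using thetas[of "M-1" M] by auto
  have mono: "i < j \<Longrightarrow> j \<le> M-1 \<Longrightarrow> th i < th j" for i j by (rule mono_upto[OF th(3)])
  have ltpi: "th k < pi" if "k \<le> M-2" for k
  proof -
    have "th k \<le> pi" using th(2) that by auto
    moreover have "th k \<noteq> pi"
    proof
      assume tp: "th k = pi"
      have kk: "k \<le> M-1" using that by simp
      then have "PHI M (th k) = real k * pi" using th(2) by blast
      then have "PHI M pi = real k * pi" using tp by simp
      moreover have "PHI M pi = (real M - 1) * pi" by (simp add: PHI_def AL_pi algebra_simps)
      ultimately have "real k = real M - 1" by simp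
      then show False using that M(2) by linarith
    qed
    ultimately show ?thesis by simp
  qed
  define g where "g t = Re (cis (-(real M * t)) * BB m n (cis t))" for t
  have "real (2*M) = real (m+n+3)" using M(1) by (simp only:)
  then have h: "real (m+n+3) / 2 = real M" by simp
  have ex: "\<exists>z. th k < z \<and> z < th (Suc k) \<and> FF m n (cis z) = 0" if k: "k < M-2" for k
  proof -
    have a: "0 \<le> th k" "th k < pi" "PHI M (th k) = real k * pi" using th(2) ltpi k by auto
    have b: "0 \<le> th (Suc k)" "th (Suc k) < pi" "PHI M (th (Suc k)) = real (Suc k) * pi"
      using th(2) ltpi k by auto
    have ab: "th k < th (Suc k)" using th(3) k by auto
    have Ga: "(-1)^k * g (th k) > 0" unfolding g_def using sign_at[OF a(1,2) a(3)[unfolded PHI_def]] .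
    have Gb': "(-1)^(Suc k) * g (th (Suc k)) > 0" unfolding g_def using sign_at[OF b(1,2) b(3)[unfolded PHI_def]] .
    then have Gb: "(-1)^k * g (th (Suc k)) < 0" by simp
    have cont: "continuous_on {th k .. th (Suc k)} (\<lambda>t. (-1)^k * g t)"
      unfolding g_def BB_def by (intro continuous_intros)
    obtain z where z: "th k \<le> z" "z \<le> th (Suc k)" "(-1)^k * g z = 0"
      using IVT2'[of "\<lambda>t. (-1)^k * g t" "th (Suc k)" 0 "th k", OF _ _ _ cont] Ga Gb ab by force
    have "z \<noteq> th k" "z \<noteq> th (Suc k)" using z(3) Ga Gb by auto
    moreover have "g z = 0" using z(3) by simp
    then have "FF m n (cis z) = 0" unfolding g_def using FF_zero_cis[of m n z] h by simp
    ultimately show ?thesis using z by (intro exI[of _ z]) auto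
  qed
  then obtain Z where Z: "\<forall>k<M-2. th k < Z k \<and> Z k < th (Suc k) \<and> FF m n (cis (Z k)) = 0"
    by metis
  show ?thesis
  proof (intro exI[of _ Z] conjI allI impI)
    fix k assume k: "k < M-2"
    have "0 \<le> th k" using th(2) k by auto
    then show "0 < Z k" using Z k by force
    have "th (Suc k) < pi" using ltpi k by simp
    then show "Z k < pi" using Z k by force
    show "FF m n (cis (Z k)) = 0" using Z k by blast
  next
    fix k j assume kj: "k < j" "j < M-2"
    have "Z k < th (Suc k)" using Z kj by auto
    also have "th (Suc k) \<le> th j"
    proof (cases "Suc k = j")
      case False
      then have "Suc k < j" "j \<le> M-1" using kj by auto
      then show ?thesis using mono[of "Suc k" j] by simp
    qed simp
    also have "th j < Z j" using Z kj by auto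
    finally show "Z k < Z j" .
  qed
qed



definition Fp :: "nat \<Rightarrow> nat \<Rightarrow> int poly" where
  "Fp m n = monom (-1) 0 + monom 3 1 + monom (2*(-1)^m) (n+1) + monom (-2*(-1)^m) (n+2)
     + monom (-1) (m+n+3) + monom 3 (m+n+2) + monom (2*(-1)^m) (m+2) + monom (-2*(-1)^m) (m+1)"

lemma poly_Fp: "poly (Fp m n) x = FF m n x"
  unfolding Fp_def FF_def by (simp add: poly_monom algebra_simps)

lemma degree_Fp: "degree (Fp m n) = m+n+3"
proof (rule antisym)
  show "degree (Fp m n) \<le> m+n+3"
    by (rule degree_le) (auto simp: Fp_def coeff_monom)
  show "m+n+3 \<le> degree (Fp m n)"
    by (rule le_degree) (simp add: Fp_def coeff_monom)
qed

lemma degree_D: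
  assumes "odd (m+n)"
  shows "degree (alex_K (cfrac (r_mn m n))) = m+n+1"
proof -
  define D where "D = alex_K (cfrac (r_mn m n))"
  have "poly (D * [:1,1:]^2) = poly (Fp m n)"
  proof
    fix x :: int
    have "(1+x)^2 * poly (map_poly of_int D) x = FF m n x" unfolding D_def by (rule eval_main[OF assms])
    moreover have "map_poly (of_int :: int \<Rightarrow> int) D = D" by (simp add: map_poly_idI)
    ultimately show "poly (D * [:1,1:]^2) x = poly (Fp m n) x"
      by (simp add: poly_Fp algebra_simps)
  qed
  then have e: "D * [:1,1:]^2 = Fp m n" by (simp add: poly_eq_poly_eq_iff)
  have "D \<noteq> 0" using e degree_Fp[of m n] by auto
  then have "degree (D * [:1,1:]^2) = degree D + 2"
    by (simp add: degree_mult_eq degree_power_eq)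
  then show ?thesis using e degree_Fp[of m n] unfolding D_def by simp
qed

lemma map_poly_of_real_mult:
  "map_poly (of_real :: real \<Rightarrow> complex) (p * q) = map_poly of_real p * map_poly of_real q"
  by (rule poly_eqI) (simp add: coeff_map_poly coeff_mult)

lemma map_poly_of_real_power:
  "map_poly (of_real :: real \<Rightarrow> complex) (p ^ k) = (map_poly of_real p) ^ k"
  by (induction k) (simp_all add: map_poly_of_real_mult)

lemma FF_recip:
  fixes x :: "'a::field"
  assumes "x \<noteq> 0"
  shows "FF m n (inverse x) * x^(m+n+3) = FF m n x"
proof -
  have h: "inverse x ^ k * x^N = x^(N-k)" if "k \<le> N" for k N
    using assms that by (simp add: power_diff field_simps)
  have gen: "FF m n y * X = -X + 3*(y^1*X) + 2*(-1)^m*(y^(n+1)*X) - 2*(-1)^m*(y^(n+2)*X)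
      - (y^(m+n+3)*X) + 3*(y^(m+n+2)*X) + 2*(-1)^m*(y^(m+2)*X) - 2*(-1)^m*(y^(m+1)*X)" for y X :: 'a
    unfolding FF_def by (simp add: algebra_simps)
  have i1: "inverse x ^ 1 * x^(m+n+3) = x^(m+n+2)" using h[of 1 "m+n+3"] by simp
  have i2: "inverse x ^ (n+1) * x^(m+n+3) = x^(m+2)" using h[of "n+1" "m+n+3"] by simp
  have i3: "inverse x ^ (n+2) * x^(m+n+3) = x^(m+1)" using h[of "n+2" "m+n+3"] by simp
  have i4: "inverse x ^ (m+n+3) * x^(m+n+3) = 1" using h[of "m+n+3" "m+n+3"] by simp
  have i5: "inverse x ^ (m+n+2) * x^(m+n+3) = x" using h[of "m+n+2" "m+n+3"] by simp
  have i6: "inverse x ^ (m+2) * x^(m+n+3) = x^(n+1)" using h[of "m+2" "m+n+3"] by simp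
  have i7: "inverse x ^ (m+1) * x^(m+n+3) = x^(n+2)" using h[of "m+1" "m+n+3"] by simp
  have "FF m n (inverse x) * x^(m+n+3) = -(x^(m+n+3)) + 3*x^(m+n+2) + 2*(-1)^m*x^(m+2) - 2*(-1)^m*x^(m+1)
     - 1 + 3*x + 2*(-1)^m*x^(n+1) - 2*(-1)^m*x^(n+2)"
    using gen[of "inverse x" "x^(m+n+3)"] unfolding i1 i2 i3 i4 i5 i6 i7 by (simp add: algebra_simps)
  then show ?thesis unfolding FF_def by (simp add: algebra_simps)
qed



theorem proposition13p5:
  fixes m n :: nat
  assumes "n \<le> m" and "odd (m + n)"
  defines "D \<equiv> alex_K (cfrac (r_mn m n))"
  shows "degree D = m + n + 1
    \<and> (\<Sum>x\<in>{x::real. poly (map_poly of_int D) x = 0}. order x (map_poly of_int D)) = 2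
    \<and> poly (map_poly (of_int :: int \<Rightarrow> real) D) 1 \<noteq> 0
    \<and> (\<forall>z::complex. poly (map_poly of_int D) z = 0 \<and> z \<notin> \<real> \<longrightarrow> cmod z = 1)"
proof -
  have odd: "odd (m+n)" by fact
  have m1: "m \<ge> 1" using assms(1,2) by (cases m) auto
  define M where "M = (m+n+3) div 2"
  have M2: "2*M = m+n+3" using odd unfolding M_def by (auto elim!: oddE)
  have Mge: "M \<ge> 2" using M2 m1 by linarith
  have degD: "degree D = m+n+1" using degree_D[OF odd] unfolding D_def .
  define Pc where "Pc = (map_poly of_int D :: complex poly)"
  define PR where "PR = (map_poly of_int D :: real poly)"
  have evC: "(1+z)^2 * poly Pc z = FF m n z" for z unfolding Pc_def D_def by (rule eval_main[OF odd])
  have evR: "(1+x)^2 * poly PR x = FF m n x" for x unfolding PR_def D_def by (rule eval_main[OF odd])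
  have degPc: "degree Pc = m+n+1" unfolding Pc_def by (simp add: degree_map_poly degD)
  have degPR: "degree PR = m+n+1" unfolding PR_def by (simp add: degree_map_poly degD)
  have Pc0: "Pc \<noteq> 0" using degPc by auto
  have PR0: "PR \<noteq> 0" using degPR by auto
  have PRC: "poly Pc (of_real x) = of_real (poly PR x)" for x
    unfolding Pc_def PR_def by (simp add: poly_altdef degree_map_poly coeff_map_poly)
  have mapR: "map_poly of_real PR = Pc" unfolding Pc_def PR_def by (simp add: map_poly_map_poly o_def)
  have cnjPc: "poly Pc (cnj z) = cnj (poly Pc z)" for z
  proof -
    have "map_poly cnj Pc = Pc" unfolding Pc_def by (simp add: map_poly_map_poly o_def)
    then show ?thesis using poly_cnj[of Pc z] by simp
  qed
  have R0: "poly PR 0 = -1" using evR[of 0] by (simp add: FF_def)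
  have R1: "poly PR 1 = 1" using evR[of 1] by (simp add: FF_def)
  have cpr: "continuous_on {0..1} (\<lambda>x. poly PR x)" by (intro continuous_intros)
  obtain a where a: "0 \<le> a" "a \<le> 1" "poly PR a = 0"
    using IVT'[of "poly PR" 0 0 1] R0 R1 cpr by auto
  have a01: "0 < a" "a < 1" using a R0 R1 by (auto simp: order.order_iff_strict)
  define b where "b = inverse a"
  have b1: "b > 1" unfolding b_def using a01 by (simp add: one_less_inverse)
  have "FF m n a = 0" using evR[of a] a(3) by simp
  then have "FF m n b = 0" using FF_recip[of a m n] a01 unfolding b_def by simp
  then have "(1+b)^2 * poly PR b = 0" using evR[of b] by simp
  then have b0: "poly PR b = 0" using b1 by simp
  obtain Z where Z: "\<forall>k<M-2. 0 < Z k \<and> Z k < pi \<and> FF m n (cis (Z k)) = 0"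
    "\<forall>k j. k < j \<longrightarrow> j < M-2 \<longrightarrow> Z k < Z j" using zeros[OF M2 Mge] by blast
  have sinZ: "sin (Z k) > 0" if "k < M-2" for k using Z(1) that by (auto intro: sin_gt_zero)
  have rootZ: "poly Pc (cis (Z k)) = 0" if k: "k < M-2" for k
  proof -
    have "1 + cis (Z k) \<noteq> 0"
    proof
      assume "1 + cis (Z k) = 0"
      then have "Im (1 + cis (Z k)) = 0" by simp
      then show False using sinZ[OF k] by simp
    qed
    then show ?thesis using evC[of "cis (Z k)"] Z(1) k by simp
  qed
  have rootZ': "poly Pc (cis (-(Z k))) = 0" if k: "k < M-2" for k
    using cnjPc[of "cis (Z k)"] rootZ[OF k] by (simp add: cis_cnj)
  have injZ: "Z k = Z j \<Longrightarrow> k < M-2 \<Longrightarrow> j < M-2 \<Longrightarrow> k = j" for k j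
    using Z(2) by (metis less_irrefl nat_neq_iff)
  have cosZ: "k = j" if "cos (Z k) = cos (Z j)" "k < M-2" "j < M-2" for k j
  proof -
    have "0 < Z k" "Z k < pi" "0 < Z j" "Z j < pi" using Z(1) that(2,3) by auto
    then have "Z k = Z j" using cos_inj_pi[of "Z k" "Z j"] that(1) by simp
    then show ?thesis using injZ that(2,3) by blast
  qed
  define A1 where "A1 = (\<lambda>k. cis (Z k)) ` {..<M-2}"
  define A2 where "A2 = (\<lambda>k. cis (-(Z k))) ` {..<M-2}"
  define A3 where "A3 = {complex_of_real a, complex_of_real b}"
  define S where "S = A1 \<union> A2 \<union> A3"
  have cA1: "card A1 = M-2" unfolding A1_def
  proof (subst card_image)
    show "inj_on (\<lambda>k. cis (Z k)) {..<M-2}"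
    proof (rule inj_onI)
      fix k j assume "k \<in> {..<M-2}" "j \<in> {..<M-2}" "cis (Z k) = cis (Z j)"
      then have "Re (cis (Z k)) = Re (cis (Z j))" by simp
      then show "k = j" using cosZ[of k j] \<open>k \<in> _\<close> \<open>j \<in> _\<close> by simp
    qed
  qed simp
  have cA2: "card A2 = M-2" unfolding A2_def
  proof (subst card_image)
    show "inj_on (\<lambda>k. cis (-(Z k))) {..<M-2}"
    proof (rule inj_onI)
      fix k j assume "k \<in> {..<M-2}" "j \<in> {..<M-2}" "cis (-(Z k)) = cis (-(Z j))"
      then have "Re (cis (-(Z k))) = Re (cis (-(Z j)))" by simp
      then show "k = j" using cosZ[of k j] \<open>k \<in> _\<close> \<open>j \<in> _\<close> by simp
    qed
  qed simp
  have ab: "a \<noteq> b" using a01 b1 by simp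
  have cA3: "card A3 = 2" unfolding A3_def using ab by simp
  have ImA1: "Im z > 0" if "z \<in> A1" for z using that sinZ unfolding A1_def by auto
  have ImA2: "Im z < 0" if "z \<in> A2" for z using that sinZ unfolding A2_def by auto
  have ImA3: "Im z = 0" if "z \<in> A3" for z using that unfolding A3_def by auto
  have d12: "A1 \<inter> A2 = {}" using ImA1 ImA2 by force
  have d3: "(A1 \<union> A2) \<inter> A3 = {}" using ImA1 ImA2 ImA3 by force
  have fin: "finite A1" "finite A2" "finite A3" unfolding A1_def A2_def A3_def by auto
  have cS: "card S = m+n+1" unfolding S_def
    using card_Un_disjoint[OF _ _ d3] card_Un_disjoint[OF _ _ d12] fin cA1 cA2 cA3 M2 Mge by simp
  have SR: "S \<subseteq> {z. poly Pc z = 0}"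
  proof -
    have "A1 \<subseteq> {z. poly Pc z = 0}" unfolding A1_def using rootZ by auto
    moreover have "A2 \<subseteq> {z. poly Pc z = 0}" unfolding A2_def using rootZ' by auto
    moreover have "A3 \<subseteq> {z. poly Pc z = 0}" unfolding A3_def using PRC a(3) b0 by auto
    ultimately show ?thesis unfolding S_def by blast
  qed
  define R where "R = {z. poly Pc z = 0}"
  have finR: "finite R" unfolding R_def using poly_roots_finite[OF Pc0] .
  have sumle: "(\<Sum>z\<in>R. order z Pc) \<le> m+n+1"
    using sum_order_le_degree[OF Pc0] degPc unfolding R_def by simp
  have ordge: "order z Pc \<ge> 1" if "z \<in> R" for z
    using that Pc0 order_root[of Pc z] unfolding R_def by auto
  have "card R \<le> (\<Sum>z\<in>R. order z Pc)"
    using sum_mono[of R "\<lambda>_. 1::nat" "\<lambda>z. order z Pc"] ordge by simp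
  then have "card R \<le> card S" using sumle cS by simp
  moreover have "card S \<le> card R" using SR finR unfolding R_def[symmetric] by (rule card_mono[rotated])
  ultimately have RS: "R = S" using card_subset_eq[OF finR SR[folded R_def]] by simp
  have ord1: "order z Pc = 1" if zS: "z \<in> S" for z
  proof (rule ccontr)
    assume "order z Pc \<noteq> 1"
    then have o2: "order z Pc \<ge> 2" using ordge[of z] zS RS by simp
    have finS: "finite S" using finR RS by simp
    have "(\<Sum>w\<in>S. order w Pc) = order z Pc + (\<Sum>w\<in>S - {z}. order w Pc)"
      using sum.remove[OF finS zS] by simp
    moreover have "card (S - {z}) \<le> (\<Sum>w\<in>S - {z}. order w Pc)"
      using sum_mono[of "S - {z}" "\<lambda>_. 1::nat" "\<lambda>w. order w Pc"] ordge RS by simp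
    moreover have "card (S - {z}) = card S - 1" using zS finS by simp
    moreover have "card S \<ge> 1" using zS finS card_0_eq[of S] by (cases "card S") auto
    ultimately have "(\<Sum>w\<in>S. order w Pc) > card S" using o2 by linarith
    then show False using sumle RS cS by simp
  qed
  have P4: "\<forall>z::complex. poly Pc z = 0 \<and> z \<notin> \<real> \<longrightarrow> cmod z = 1"
  proof (intro allI impI)
    fix z :: complex assume z: "poly Pc z = 0 \<and> z \<notin> \<real>"
    then have "z \<in> S" using RS unfolding R_def by auto
    moreover have "z \<notin> A3" using z unfolding A3_def by auto
    ultimately show "cmod z = 1" unfolding S_def A1_def A2_def by auto
  qed
  have realR: "{x::real. poly PR x = 0} = {a, b}"
  proof
    show "{a, b} \<subseteq> {x. poly PR x = 0}" using a(3) b0 by auto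
    show "{x. poly PR x = 0} \<subseteq> {a, b}"
    proof
      fix x assume "x \<in> {x. poly PR x = 0}"
      then have "poly Pc (complex_of_real x) = 0" using PRC[of x] by simp
      then have "complex_of_real x \<in> S" using RS unfolding R_def by blast
      moreover have "Im (complex_of_real x) = 0" by simp
      ultimately have "complex_of_real x \<in> A3" unfolding S_def using ImA1 ImA2 by force
      then show "x \<in> {a, b}" unfolding A3_def by auto
    qed
  qed
  have ordR: "order x PR = 1" if x: "x \<in> {a, b}" for x
  proof (rule antisym)
    have "poly PR x = 0" using x a(3) b0 by auto
    then show "1 \<le> order x PR" using PR0 order_root[of PR x] by simp
    have "complex_of_real x \<in> S" unfolding S_def A3_def using x by auto
    then have oc: "order (complex_of_real x) Pc = 1" by (rule ord1)
    obtain Q where Q: "PR = [:-x,1:]^(order x PR) * Q" using order_1[of x PR] by (elim dvdE)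
    have "Pc = [:-complex_of_real x,1:]^(order x PR) * map_poly of_real Q"
      unfolding mapR[symmetric] by (subst Q) (simp add: map_poly_of_real_mult map_poly_of_real_power map_poly_pCons)
    then have "[:-complex_of_real x,1:]^(order x PR) dvd Pc" by (metis dvd_triv_left)
    then have "order x PR \<le> order (complex_of_real x) Pc" using order_divides Pc0 by blast
    then show "order x PR \<le> 1" using oc by simp
  qed
  have P2: "(\<Sum>x\<in>{x::real. poly PR x = 0}. order x PR) = 2"
    unfolding realR using ordR ab by simp
  show ?thesis using degD P2 P4 R1 unfolding PR_def Pc_def by simp
qed


end
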